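(* Let $G$ be a graph on $n'\geq n$ vertices and let $H\subseteq G$ be a complete subgraph $H\cong K_n$. Consider a game on $E(G)$ in which Red and Blue alternately claim previously unclaimed edges, one per turn, and suppose that at the moment Red starts claiming edges there is a vertex $v\in V(H)$ with $d_B(v)\geq 1$, but Blue has claimed at most one edge of $E(H)$. Then Red can ensure that, for all $1\leq j\leq n/2-1$, immediately after her $j$-th move her graph (within $H$) is a matching consisting of $j$ edges and $D_j\leq 1$. Moreover, if $D_k=1$ for some $1\leq k\leq n/2-1$, then $D_j=1$ for all $k\leq j\leq n/2-1$.
   Context: $R$ and $B$ denote the graphs formed by the edges claimed so far by Red and Blue respectively; $d_B(v)$ is the degree of $v$ in $B$. For $v\in V(H)$, $d_B^H(v)$ (resp. $d_R^H(v)$) is the number of Blue (resp. Red) edges joining $v$ to other vertices of $H$. A vertex $v\in V(H)$ is H-distinct if $d_B^H(v)\geq 1$ and $d_R^H(v)=0$. $D_j$ denotes the number of H-distinct vertices immediately after Red's $j$-th move. *)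

theory Defs
  imports Complex_Main
begin

definition edges_of :: "'a set \<Rightarrow> 'a set set" where
  "edges_of H = {e. \<exists>x y. x \<in> H \<and> y \<in> H \<and> x \<noteq> y \<and> e = {x, y}}"

definition simple_graph :: "'a set \<Rightarrow> 'a set set \<Rightarrow> bool" where
  "simple_graph V E \<longleftrightarrow> finite V \<and> E \<subseteq> edges_of V"

definition is_matching :: "'a set set \<Rightarrow> bool" where
  "is_matching M \<longleftrightarrow> (\<forall>e\<in>M. \<forall>f\<in>M. e \<noteq> f \<longrightarrow> e \<inter> f = {})"

text \<open>A play is a list of moves; moves at even positions (0,2,4,...) are Red's,
  moves at odd positions are Blue's. Red starts with no edges; Blue starts with B0.\<close>
definition red_after :: "'a set list \<Rightarrow> nat \<Rightarrow> 'a set set" where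
  "red_after ms k = {ms ! i | i. i < k \<and> i < length ms \<and> even i}"

definition blue_after :: "'a set set \<Rightarrow> 'a set list \<Rightarrow> nat \<Rightarrow> 'a set set" where
  "blue_after B0 ms k = B0 \<union> {ms ! i | i. i < k \<and> i < length ms \<and> odd i}"

definition legal_move :: "'a set set \<Rightarrow> 'a set set \<Rightarrow> 'a set list \<Rightarrow> nat \<Rightarrow> bool" where
  "legal_move E B0 ms i \<longleftrightarrow> i < length ms \<and> ms ! i \<in> E \<and> ms ! i \<notin> B0 \<and> ms ! i \<notin> set (take i ms)"

definition deg_in :: "'a set \<Rightarrow> 'a set set \<Rightarrow> 'a \<Rightarrow> nat" where
  "deg_in H F v = card {e \<in> F. v \<in> e \<and> e \<in> edges_of H}"

definition H_distinct :: "'a set \<Rightarrow> 'a set set \<Rightarrow> 'a set set \<Rightarrow> 'a \<Rightarrow> bool" where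
  "H_distinct H R B v \<longleftrightarrow> v \<in> H \<and> deg_in H B v \<ge> 1 \<and> deg_in H R v = 0"

text \<open>D_j: number of H-distinct vertices immediately after Red's j-th move
  (i.e. after the first 2j-1 moves of the play).\<close>
definition D :: "'a set \<Rightarrow> 'a set set \<Rightarrow> 'a set list \<Rightarrow> nat \<Rightarrow> nat" where
  "D H B0 ms j = card {v. H_distinct H (red_after ms (2*j - 1)) (blue_after B0 ms (2*j - 1)) v}"

end

theory Submission imports Defs begin

lemma finite_edges_of: "finite H \<Longrightarrow> finite (edges_of H)"
proof -
  assume "finite H"
  have "edges_of H \<subseteq> Pow H" by (auto simp: edges_of_def)
  thus ?thesis using \<open>finite H\<close> finite_subset by blast
qed

lemma edges_of_mono: "S \<subseteq> H \<Longrightarrow> edges_of S \<subseteq> edges_of H"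
  by (auto simp: edges_of_def)

lemma edge_in: "x \<in> H \<Longrightarrow> y \<in> H \<Longrightarrow> x \<noteq> y \<Longrightarrow> {x,y} \<in> edges_of H"
  by (auto simp: edges_of_def)

lemma edge_card: "e \<in> edges_of H \<Longrightarrow> card e = 2"
  by (auto simp: edges_of_def)

lemma edge_sub: "e \<in> edges_of H \<Longrightarrow> e \<subseteq> H"
  by (auto simp: edges_of_def)

lemma deg_pos_iff: "finite H \<Longrightarrow> (deg_in H F v \<ge> 1) \<longleftrightarrow> (\<exists>e\<in>F. v \<in> e \<and> e \<in> edges_of H)"
proof -
  assume f: "finite H"
  have "finite {e \<in> F. v \<in> e \<and> e \<in> edges_of H}"
    by (rule finite_subset[OF _ finite_edges_of[OF f]]) auto
  thus ?thesis unfolding deg_in_def by (auto simp: Suc_le_eq card_gt_0_iff)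
qed

lemma deg_zero_iff: "finite H \<Longrightarrow> (deg_in H F v = 0) \<longleftrightarrow> \<not>(\<exists>e\<in>F. v \<in> e \<and> e \<in> edges_of H)"
  using deg_pos_iff[of H F v] by linarith

lemma dist_iff: "finite H \<Longrightarrow> H_distinct H R B v \<longleftrightarrow>
   v \<in> H \<and> (\<exists>e\<in>B. v \<in> e \<and> e \<in> edges_of H) \<and> \<not>(\<exists>e\<in>R. v \<in> e \<and> e \<in> edges_of H)"
  unfolding H_distinct_def using deg_pos_iff[of H B v] deg_zero_iff[of H R v] by auto

definition dset :: "'a set \<Rightarrow> 'a set set \<Rightarrow> 'a set set \<Rightarrow> 'a set" where
  "dset H R B = {v. H_distinct H R B v}"

lemma dset_iff: "finite H \<Longrightarrow> v \<in> dset H R B \<longleftrightarrow>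
   v \<in> H \<and> (\<exists>e\<in>B. v \<in> e \<and> e \<in> edges_of H) \<and> \<not>(\<exists>e\<in>R. v \<in> e \<and> e \<in> edges_of H)"
  unfolding dset_def by (simp add: dist_iff)

lemma dset_sub: assumes "finite H" shows "dset H R B \<subseteq> H"
  using assms by (auto simp: dset_iff)

lemma finite_dset: "finite H \<Longrightarrow> finite (dset H R B)"
  by (rule finite_subset[OF dset_sub]) assumption+

definition good :: "'a set \<Rightarrow> 'a set set \<Rightarrow> 'a set set \<Rightarrow> 'a set \<Rightarrow> bool" where
  "good H R B e \<longleftrightarrow> (\<exists>x y. x \<in> H - \<Union>R \<and> y \<in> H - \<Union>R \<and> x \<noteq> y \<and> e = {x,y} \<and> e \<notin> B
      \<and> card (dset H R B - e) = min (card (dset H R B)) 1)"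

lemma card_ge1: "1 \<le> card A \<Longrightarrow> \<exists>x. x \<in> A"
  by (metis card.empty ex_in_conv not_one_le_zero)

lemma two_elems: "2 \<le> card A \<Longrightarrow> \<exists>x y. x \<in> A \<and> y \<in> A \<and> x \<noteq> y"
proof -
  assume a: "2 \<le> card A"
  then obtain x where x: "x \<in> A" using card_ge1[of A] by auto
  have "card (A - {x}) \<ge> 1" using a x by (simp add: card_Diff_singleton_if)
  then obtain y where "y \<in> A - {x}" using card_ge1 by blast
  thus ?thesis using x by blast
qed

lemma exists_good:
  assumes fin: "finite H" and RH: "R \<subseteq> edges_of H" and cR: "card R = k"
    and big: "2*k+4 \<le> card H" and S3: "card (dset H R B) \<le> 3"
    and B1: "card (B \<inter> edges_of (dset H R B)) \<le> 1"
  shows "\<exists>e. good H R B e"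
proof -
  define S where "S = dset H R B"
  define U where "U = H - \<Union>R"
  have finR: "finite R" using RH finite_edges_of[OF fin] finite_subset by blast
  have UR: "\<Union>R \<subseteq> H" using RH edge_sub by blast
  have "card (\<Union>R) \<le> sum card R" by (rule card_Union_le_sum_card)
  also have "\<dots> \<le> 2 * card R" using sum_bounded_above[of R card 2] RH edge_card by fastforce
  finally have cU: "card (\<Union>R) \<le> 2*k" using cR by simp
  have cardU: "card U \<ge> 4" unfolding U_def using card_Diff_subset[OF finite_subset[OF UR fin] UR] cU big by linarith
  have finS: "finite S" unfolding S_def using finite_dset[OF fin] .
  have finU: "finite U" unfolding U_def using fin by simp
  have SU: "S \<subseteq> U" unfolding S_def U_def using RH by (auto simp: dset_iff[OF fin])
  have key: "\<And>z e. z \<in> U - S \<Longrightarrow> e \<in> B \<Longrightarrow> z \<in> e \<Longrightarrow> e \<notin> edges_of H"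
    unfolding S_def U_def by (auto simp: dset_iff[OF fin])
  have cUS: "card (U - S) \<ge> 4 - card S" using card_Diff_subset[OF finS SU] cardU by linarith
  have goodI: "\<And>x y. x \<in> U \<Longrightarrow> y \<in> U \<Longrightarrow> x \<noteq> y \<Longrightarrow> {x,y} \<notin> B \<Longrightarrow>
      card (S - {x,y}) = min (card S) 1 \<Longrightarrow> \<exists>e. good H R B e"
    unfolding good_def S_def U_def by blast
  have UH: "U \<subseteq> H" unfolding U_def by blast
  consider "card S = 3" | "card S = 2" | "card S \<le> 1" using S3 unfolding S_def by linarith
  thus ?thesis
  proof cases
    case 1
    then obtain a b c where abc: "S = {a,b,c}" "a \<noteq> b" "b \<noteq> c" "a \<noteq> c" by (auto simp: card_3_iff)
    have finBS: "finite (B \<inter> edges_of S)" using finite_edges_of[OF finS] by simp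
    have aU: "a \<in> U" and bU: "b \<in> U" and cU': "c \<in> U" using SU abc by auto
    show ?thesis
    proof (cases "{a,b} \<in> B")
      case False
      have "S - {a,b} = {c}" using abc by auto
      hence "card (S - {a,b}) = min (card S) 1" using 1 by simp
      thus ?thesis by (rule goodI[OF aU bU abc(2) False])
    next
      case True
      have nB: "{a,c} \<notin> B"
      proof
        assume "{a,c} \<in> B"
        hence sub: "{{a,b},{a,c}} \<subseteq> B \<inter> edges_of S" using True abc by (auto simp: edges_of_def)
        have c2: "card {{a,b},{a,c}} = 2" using abc by (auto simp: doubleton_eq_iff)
        have "card {{a,b},{a,c}} \<le> card (B \<inter> edges_of S)" by (rule card_mono[OF finBS sub])
        thus False using B1 c2 unfolding S_def by simp
      qed
      have "S - {a,c} = {b}" using abc by auto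
      hence "card (S - {a,c}) = min (card S) 1" using 1 by simp
      thus ?thesis by (rule goodI[OF aU cU' abc(4) nB])
    qed
  next
    case 2
    then obtain x y where xy: "S = {x,y}" "x \<noteq> y" by (auto simp: card_2_iff)
    from cUS 2 obtain z where z: "z \<in> U - S" using card_ge1[of "U - S"] by auto
    have xU: "x \<in> U" using xy SU by auto
    have zU: "z \<in> U" and xz: "x \<noteq> z" using z xy by auto
    have "{x,z} \<in> edges_of H" using xU zU xz UH by (intro edge_in) auto
    hence nB: "{x,z} \<notin> B" using key[OF z, of "{x,z}"] by blast
    have "S - {x,z} = {y}" using xy z by auto
    hence "card (S - {x,z}) = min (card S) 1" using 2 by simp
    thus ?thesis by (rule goodI[OF xU zU xz nB])
  next
    case 3
    have "2 \<le> card (U - S)" using cUS 3 by linarith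
    then obtain z w where zw: "z \<in> U - S" "w \<in> U - S" "z \<noteq> w" using two_elems[of "U - S"] by blast
    have zU: "z \<in> U" and wU: "w \<in> U" using zw by auto
    have "{z,w} \<in> edges_of H" using zU wU zw(3) UH by (intro edge_in) auto
    hence nB: "{z,w} \<notin> B" using key[OF zw(1), of "{z,w}"] by blast
    have "S - {z,w} = S" using zw by auto
    hence "card (S - {z,w}) = min (card S) 1" using 3 by simp
    thus ?thesis by (rule goodI[OF zU wU zw(3) nB])
  qed
qed

lemma good_post:
  assumes fin: "finite H" and g: "good H R B e" and RH: "R \<subseteq> edges_of H" and m: "is_matching R"
  shows "e \<in> edges_of H" "e \<notin> R" "e \<notin> B" "insert e R \<subseteq> edges_of H" "is_matching (insert e R)"
    "dset H (insert e R) B = dset H R B - e"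
proof -
  from g obtain x y where xy: "x \<in> H - \<Union>R" "y \<in> H - \<Union>R" "x \<noteq> y" "e = {x,y}" "e \<notin> B"
    unfolding good_def by (elim exE conjE) simp
  have xH: "x \<in> H" and yH: "y \<in> H" and xR: "x \<notin> \<Union>R" and yR: "y \<notin> \<Union>R" using xy(1,2) by simp_all
  show e: "e \<in> edges_of H" unfolding xy(4) using xH yH xy(3) by (rule edge_in)
  show "e \<notin> R"
  proof
    assume "e \<in> R" hence "x \<in> \<Union>R" using xy(4) by auto
    thus False using xR by simp
  qed
  show "e \<notin> B" using xy(5) .
  show "insert e R \<subseteq> edges_of H" using e RH by simp
  have dj: "\<forall>f\<in>R. e \<inter> f = {}" using xR yR xy(4) by auto
  show "is_matching (insert e R)" unfolding is_matching_def
  proof (intro ballI impI)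
    fix a b assume a: "a \<in> insert e R" and b: "b \<in> insert e R" and ab: "a \<noteq> b"
    show "a \<inter> b = {}"
    proof (cases "a = e")
      case True thus ?thesis using b ab dj by auto
    next
      case False
      hence aR: "a \<in> R" using a by simp
      show ?thesis
      proof (cases "b = e")
        case True thus ?thesis using aR dj by auto
      next
        case False thus ?thesis using aR b ab m unfolding is_matching_def by simp
      qed
    qed
  qed
  show "dset H (insert e R) B = dset H R B - e"
    using e by (auto simp: dset_iff[OF fin])
qed

lemma blue_step:
  assumes fin: "finite H" and D1: "card (dset H R B) \<le> 1"
  shows "card (dset H R (insert f B)) \<le> 3"
    "card (insert f B \<inter> edges_of (dset H R (insert f B))) \<le> 1"
    "dset H R B \<subseteq> dset H R (insert f B)"
proof -
  define D where "D = dset H R B"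
  define S where "S = dset H R (insert f B)"
  define F where "F = (if f \<in> edges_of H then f else {})"
  have finD: "finite D" unfolding D_def using finite_dset[OF fin] .
  have finF: "finite F" and cF: "card F \<le> 2"
  proof -
    show "finite F"
    proof (cases "f \<in> edges_of H")
      case True thus ?thesis unfolding F_def using finite_subset[OF edge_sub[OF True] fin] by simp
    qed (simp add: F_def)
    show "card F \<le> 2"
    proof (cases "f \<in> edges_of H")
      case True thus ?thesis unfolding F_def using edge_card[OF True] by simp
    qed (simp add: F_def)
  qed
  have "S \<subseteq> D \<union> F"
  proof
    fix v assume "v \<in> S"
    hence v: "v \<in> H" "\<exists>e\<in>insert f B. v \<in> e \<and> e \<in> edges_of H" "\<not>(\<exists>e\<in>R. v \<in> e \<and> e \<in> edges_of H)"
      unfolding S_def using dset_iff[OF fin] by blast+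
    then obtain e where e: "e \<in> insert f B" "v \<in> e" "e \<in> edges_of H" by blast
    show "v \<in> D \<union> F"
    proof (cases "e = f")
      case True
      have "v \<in> F" unfolding F_def using e True by simp
      thus ?thesis by blast
    next
      case False
      hence "e \<in> B" using e by simp
      hence "v \<in> D" unfolding D_def using v e by (auto simp: dset_iff[OF fin])
      thus ?thesis by simp
    qed
  qed
  hence "card S \<le> card (D \<union> F)" using finD finF by (simp add: card_mono)
  also have "\<dots> \<le> card D + card F" by (rule card_Un_le)
  finally have "card S \<le> card D + card F" .
  thus "card (dset H R (insert f B)) \<le> 3" using cF D1 unfolding S_def D_def by linarith
  have "insert f B \<inter> edges_of S \<subseteq> {f}"
  proof
    fix g assume g: "g \<in> insert f B \<inter> edges_of S"
    show "g \<in> {f}"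
    proof (rule ccontr)
      assume "g \<notin> {f}"
      hence gB: "g \<in> B" using g by blast
      have "g \<in> edges_of S" using g by simp
      then obtain x y where xy: "x \<in> S" "y \<in> S" "x \<noteq> y" "g = {x,y}" unfolding edges_of_def by blast
      have SH: "S \<subseteq> H" unfolding S_def using dset_sub[OF fin] .
      have gH: "g \<in> edges_of H" unfolding xy(4) using xy(1-3) SH by (intro edge_in) auto
      have xS: "x \<in> S" and yS: "y \<in> S" using xy by simp_all
      have xD: "x \<in> D" using xS gB gH xy(4) unfolding S_def D_def dset_iff[OF fin] by blast
      have yD: "y \<in> D" using yS gB gH xy(4) unfolding S_def D_def dset_iff[OF fin] by blast
      have "{x,y} \<subseteq> D" using xD yD by simp
      hence "card {x,y} \<le> card D" using finD by (rule card_mono[rotated])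
      thus False using xy D1 unfolding D_def by simp
    qed
  qed
  thus "card (insert f B \<inter> edges_of (dset H R (insert f B))) \<le> 1" unfolding S_def
    using card_mono[of "{f}"] by fastforce
  show "dset H R B \<subseteq> dset H R (insert f B)" by (auto simp: dset_iff[OF fin])
qed


lemma good_card: "good H R B e \<Longrightarrow> card (dset H R B - e) = min (card (dset H R B)) 1"
  unfolding good_def by blast

lemma red_after_0: "red_after ms 0 = {}" by (simp add: red_after_def)
lemma blue_after_0: "blue_after B0 ms 0 = B0" by (simp add: blue_after_def)

lemma red_after_Suc: "k < length ms \<Longrightarrow>
  red_after ms (Suc k) = (if even k then insert (ms!k) (red_after ms k) else red_after ms k)"
  unfolding red_after_def by (auto simp: less_Suc_eq)

lemma blue_after_Suc: "k < length ms \<Longrightarrow>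
  blue_after B0 ms (Suc k) = (if odd k then insert (ms!k) (blue_after B0 ms k) else blue_after B0 ms k)"
  unfolding blue_after_def by (auto simp: less_Suc_eq)

lemma red_after_take: "k \<le> length ms \<Longrightarrow> red_after (take k ms) (length (take k ms)) = red_after ms k"
  unfolding red_after_def by (auto simp: min_def) (metis nth_take)

lemma blue_after_take: "k \<le> length ms \<Longrightarrow> blue_after B0 (take k ms) (length (take k ms)) = blue_after B0 ms k"
  unfolding blue_after_def by (auto simp: min_def) (metis nth_take)

lemma set_take_sub: "k \<le> length ms \<Longrightarrow> set (take k ms) \<subseteq> red_after ms k \<union> blue_after B0 ms k"
proof
  fix x assume k: "k \<le> length ms" and "x \<in> set (take k ms)"
  then obtain i where i: "i < k" "x = ms ! i" by (auto simp: in_set_conv_nth nth_take)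
  show "x \<in> red_after ms k \<union> blue_after B0 ms k"
  proof (cases "even i")
    case True thus ?thesis using i k unfolding red_after_def by auto
  next
    case False thus ?thesis using i k unfolding blue_after_def by auto
  qed
qed

lemma B0_sub: "B0 \<subseteq> blue_after B0 ms k" by (simp add: blue_after_def)

lemma init_dset:
  assumes fin: "finite H" and c: "card (B0 \<inter> edges_of H) \<le> 1"
  shows "card (dset H {} B0) \<le> 3" "card (B0 \<inter> edges_of (dset H {} B0)) \<le> 1"
proof -
  define X where "X = B0 \<inter> edges_of H"
  have finX: "finite X" unfolding X_def using finite_edges_of[OF fin] by simp
  have "dset H {} B0 \<subseteq> \<Union>X" unfolding X_def by (auto simp: dset_iff[OF fin])
  moreover have finU: "finite (\<Union>X)" using finX finite_subset[OF edge_sub fin] unfolding X_def by auto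
  ultimately have "card (dset H {} B0) \<le> card (\<Union>X)" by (rule card_mono[rotated])
  also have "\<dots> \<le> sum card X" by (rule card_Union_le_sum_card)
  also have "\<dots> \<le> card X * 2" using sum_bounded_above[of X card 2] edge_card unfolding X_def by fastforce
  finally show "card (dset H {} B0) \<le> 3" using c unfolding X_def by linarith
  have "B0 \<inter> edges_of (dset H {} B0) \<subseteq> X" unfolding X_def using edges_of_mono[OF dset_sub[OF fin]] by blast
  hence "card (B0 \<inter> edges_of (dset H {} B0)) \<le> card X" using finX by (rule card_mono[rotated])
  thus "card (B0 \<inter> edges_of (dset H {} B0)) \<le> 1" using c unfolding X_def by linarith
qed

theorem lemma2p4:
  fixes V :: "'a set" and E :: "'a set set" and H :: "'a set" and n :: nat
    and B0 :: "'a set set"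
  assumes "simple_graph V E"
    and "H \<subseteq> V" and "card H = n" and "edges_of H \<subseteq> E"
    and "B0 \<subseteq> E"
    and "\<exists>v\<in>H. \<exists>e\<in>B0. v \<in> e"
    and "card (B0 \<inter> edges_of H) \<le> 1"
  shows "\<exists>\<sigma> :: 'a set list \<Rightarrow> 'a set. \<forall>ms.
     (\<forall>i<length ms. even i \<longrightarrow> ms ! i = \<sigma> (take i ms)) \<and>
     (\<forall>i<length ms. odd i \<longrightarrow> legal_move E B0 ms i) \<longrightarrow>
       (\<forall>j. 1 \<le> j \<and> real j \<le> real n / 2 - 1 \<and> 2*j - 1 \<le> length ms \<longrightarrow>
           legal_move E B0 ms (2*(j-1)) \<and>
           red_after ms (2*j - 1) \<subseteq> edges_of H \<and>
           is_matching (red_after ms (2*j - 1)) \<and>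
           card (red_after ms (2*j - 1)) = j \<and>
           D H B0 ms j \<le> 1) \<and>
       (\<forall>k j. 1 \<le> k \<and> k \<le> j \<and> real j \<le> real n / 2 - 1 \<and> 2*j - 1 \<le> length ms \<and>
           D H B0 ms k = 1 \<longrightarrow> D H B0 ms j = 1)"
proof -
  note cH = assms(3) and EH = assms(4) and cB0 = assms(7)
  define \<sigma> where "\<sigma> = (\<lambda>h. SOME e. good H (red_after h (length h)) (blue_after B0 h (length h)) e)"
  show ?thesis
  proof (rule exI[of _ \<sigma>], intro allI impI)
    fix ms assume hyp: "(\<forall>i<length ms. even i \<longrightarrow> ms ! i = \<sigma> (take i ms)) \<and>
     (\<forall>i<length ms. odd i \<longrightarrow> legal_move E B0 ms i)"
    hence rd: "\<And>i. i < length ms \<Longrightarrow> even i \<Longrightarrow> ms ! i = \<sigma> (take i ms)"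
      and bl: "\<And>i. i < length ms \<Longrightarrow> odd i \<Longrightarrow> legal_move E B0 ms i" by auto
    define Rt where "Rt k = red_after ms k" for k
    define Bt where "Bt k = blue_after B0 ms k" for k
    define Ds where "Ds k = dset H (Rt k) (Bt k)" for k
    define Pre where "Pre k \<longleftrightarrow> Rt (2*k) \<subseteq> edges_of H \<and> is_matching (Rt (2*k)) \<and> card (Rt (2*k)) = k
        \<and> card (Ds (2*k)) \<le> 3 \<and> card (Bt (2*k) \<inter> edges_of (Ds (2*k))) \<le> 1
        \<and> (k > 0 \<longrightarrow> Ds (2*k-1) \<subseteq> Ds (2*k))" for k
    define Post where "Post k \<longleftrightarrow> legal_move E B0 ms (2*k) \<and> Rt (2*k+1) \<subseteq> edges_of H
        \<and> is_matching (Rt (2*k+1)) \<and> card (Rt (2*k+1)) = Suc k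
        \<and> card (Ds (2*k+1)) = min (card (Ds (2*k))) 1" for k
    have PrePost: "Post k" if l: "2*k+1 \<le> length ms" and nb: "2*k+4 \<le> n" and P: "Pre k" for k
    proof -
      have finH: "finite H" using cH nb card.infinite by fastforce
      let ?R = "Rt (2*k)" and ?B = "Bt (2*k)"
      have RH: "?R \<subseteq> edges_of H" and m: "is_matching ?R" and cR: "card ?R = k"
        and S3: "card (dset H ?R ?B) \<le> 3" and B1: "card (?B \<inter> edges_of (dset H ?R ?B)) \<le> 1"
        using P unfolding Pre_def Ds_def by auto
      have ex: "\<exists>e. good H ?R ?B e"
        by (rule exists_good[OF finH RH cR _ S3 B1]) (use cH nb in simp)
      have lk: "2*k < length ms" using l by simp
      have "ms ! (2*k) = \<sigma> (take (2*k) ms)" using rd[OF lk] by simp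
      also have "\<dots> = (SOME e. good H ?R ?B e)" unfolding \<sigma>_def Rt_def Bt_def
        using red_after_take[of "2*k" ms] blue_after_take[of "2*k" ms B0] lk by simp
      finally have me: "ms ! (2*k) = (SOME e. good H ?R ?B e)" .
      have g: "good H ?R ?B (ms ! (2*k))" unfolding me by (rule someI_ex[OF ex])
      note gp = good_post[OF finH g RH m]
      have R1: "Rt (2*k+1) = insert (ms!(2*k)) ?R" unfolding Rt_def using red_after_Suc[OF lk] by simp
      have B1': "Bt (2*k+1) = ?B" unfolding Bt_def using blue_after_Suc[OF lk, of B0] by simp
      have finR: "finite ?R" using RH finite_edges_of[OF finH] finite_subset by blast
      have legal: "legal_move E B0 ms (2*k)" unfolding legal_move_def
      proof (intro conjI)
        show "2*k < length ms" by (rule lk)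
        show "ms ! (2*k) \<in> E" using gp(1) EH by blast
        show "ms ! (2*k) \<notin> B0" using gp(3) B0_sub[of B0 ms "2*k"] unfolding Bt_def by blast
        show "ms ! (2*k) \<notin> set (take (2*k) ms)" using gp(2,3) set_take_sub[of "2*k" ms B0] lk
          unfolding Rt_def Bt_def by auto
      qed
      show ?thesis unfolding Post_def
      proof (intro conjI)
        show "legal_move E B0 ms (2*k)" by (rule legal)
        show "Rt (2*k+1) \<subseteq> edges_of H" unfolding R1 by (rule gp(4))
        show "is_matching (Rt (2*k+1))" unfolding R1 by (rule gp(5))
        show "card (Rt (2*k+1)) = Suc k" unfolding R1 using finR gp(2) cR by simp
        show "card (Ds (2*k+1)) = min (card (Ds (2*k))) 1"
          unfolding Ds_def R1 B1' gp(6) by (rule good_card[OF g])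
      qed
    qed
    have PreInd: "Pre k" if "2*k+1 \<le> length ms" and "2*k+4 \<le> n" for k
      using that
    proof (induction k)
      case 0
      have finH: "finite H" using cH 0 card.infinite by fastforce
      have R0: "Rt 0 = {}" and B0': "Bt 0 = B0" unfolding Rt_def Bt_def
        by (simp_all add: red_after_0 blue_after_0)
      show ?case unfolding Pre_def Ds_def using init_dset[OF finH cB0]
        by (simp add: R0 B0' is_matching_def)
    next
      case (Suc k)
      have finH: "finite H" using cH Suc.prems card.infinite by fastforce
      have l: "2*k+1 \<le> length ms" and nb: "2*k+4 \<le> n" using Suc.prems by simp_all
      have P: "Pre k" by (rule Suc.IH[OF l nb])
      have Q: "Post k" by (rule PrePost[OF l nb P])
      have lk: "2*k+1 < length ms" using Suc.prems by simp
      have odd: "odd (2*k+1)" by simp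
      have e2: "2 * Suc k = Suc (2*k+1)" by simp
      have R2: "Rt (2*Suc k) = Rt (2*k+1)" unfolding Rt_def e2 using red_after_Suc[OF lk] by simp
      have B2: "Bt (2*Suc k) = insert (ms!(2*k+1)) (Bt (2*k+1))" unfolding Bt_def e2
        using blue_after_Suc[OF lk, of B0] by simp
      have D1: "card (dset H (Rt (2*k+1)) (Bt (2*k+1))) \<le> 1" using Q unfolding Post_def Ds_def by simp
      note bs = blue_step[OF finH D1, of "ms!(2*k+1)"]
      have e3: "2 * Suc k - 1 = 2*k+1" by simp
      show ?case unfolding Pre_def Ds_def R2 B2 e3 using Q bs unfolding Post_def by simp
    qed
    have range: "2*j+2 \<le> n" if "real j \<le> real n / 2 - 1" for j
    proof -
      have "real (2*j+2) \<le> real n" using that by simp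
      thus ?thesis by linarith
    qed
    have DD: "D H B0 ms j = card (Ds (2*j - 1))" for j
      unfolding D_def Ds_def Rt_def Bt_def dset_def by simp
    have Dle: "card (Ds (2*k+1)) \<le> 1" if "2*k+1 \<le> length ms" and "2*k+4 \<le> n" for k
      using PrePost[OF that PreInd[OF that]] unfolding Post_def by simp
    have Dmono: "card (Ds (2*k+1)) \<le> card (Ds (2*Suc k+1))"
      if "2*Suc k+1 \<le> length ms" and "2*Suc k+4 \<le> n" for k
    proof -
      have finH: "finite H" using cH that card.infinite by fastforce
      have P: "Pre (Suc k)" by (rule PreInd[OF that])
      have Q: "Post (Suc k)" by (rule PrePost[OF that P])
      have sub: "Ds (2*k+1) \<subseteq> Ds (2*Suc k)" using P unfolding Pre_def by simp
      have "card (Ds (2*k+1)) \<le> card (Ds (2*Suc k))"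
        using sub finite_dset[OF finH] unfolding Ds_def by (simp add: card_mono)
      moreover have "card (Ds (2*k+1)) \<le> 1" using Dle that by simp
      ultimately show ?thesis using Q unfolding Post_def by simp
    qed
    have Dchain: "card (Ds (2*k+1)) \<le> card (Ds (2*j+1))"
      if "k \<le> j" "2*j+1 \<le> length ms" "2*j+4 \<le> n" for k j
      using that
    proof (induction j rule: dec_induct)
      case base thus ?case by simp
    next
      case (step i)
      have "card (Ds (2*i+1)) \<le> card (Ds (2*Suc i+1))" using Dmono[of i] step.prems by simp
      thus ?case using step.IH step.prems by simp
    qed
    show "(\<forall>j. 1 \<le> j \<and> real j \<le> real n / 2 - 1 \<and> 2*j - 1 \<le> length ms \<longrightarrow>
           legal_move E B0 ms (2*(j-1)) \<and>
           red_after ms (2*j - 1) \<subseteq> edges_of H \<and>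
           is_matching (red_after ms (2*j - 1)) \<and>
           card (red_after ms (2*j - 1)) = j \<and>
           D H B0 ms j \<le> 1) \<and>
       (\<forall>k j. 1 \<le> k \<and> k \<le> j \<and> real j \<le> real n / 2 - 1 \<and> 2*j - 1 \<le> length ms \<and>
           D H B0 ms k = 1 \<longrightarrow> D H B0 ms j = 1)"
    proof (rule conjI; intro allI impI)
      fix j assume h: "1 \<le> j \<and> real j \<le> real n / 2 - 1 \<and> 2*j - 1 \<le> length ms"
      then obtain k where jk: "j = Suc k" by (cases j) auto
      have l: "2*k+1 \<le> length ms" using h jk by simp
      have nb: "2*k+4 \<le> n" using range[of j] h jk by simp
      have Q: "Post k" by (rule PrePost[OF l nb PreInd[OF l nb]])
      have e1: "2*j - 1 = 2*k+1" and e2: "2*(j-1) = 2*k" using jk by simp_all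
      show "legal_move E B0 ms (2*(j-1)) \<and>
           red_after ms (2*j - 1) \<subseteq> edges_of H \<and>
           is_matching (red_after ms (2*j - 1)) \<and>
           card (red_after ms (2*j - 1)) = j \<and>
           D H B0 ms j \<le> 1"
        unfolding e1 e2 DD using Q Dle[OF l nb] jk unfolding Post_def Rt_def by simp
    next
      fix k j assume h: "1 \<le> k \<and> k \<le> j \<and> real j \<le> real n / 2 - 1 \<and> 2*j - 1 \<le> length ms \<and>
           D H B0 ms k = 1"
      obtain k' where kk: "k = Suc k'" using h by (cases k) auto
      obtain j' where jj: "j = Suc j'" using h by (cases j) auto
      have l: "2*j'+1 \<le> length ms" using h jj by simp
      have nb: "2*j'+4 \<le> n" using range[of j] h jj by simp
      have "card (Ds (2*k'+1)) \<le> card (Ds (2*j'+1))" using Dchain[of k' j' ] h kk jj l nb by simp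
      have "D H B0 ms k = 1" using h by simp
      moreover have "D H B0 ms k = card (Ds (2*k'+1))" using DD[of k] kk by simp
      ultimately have "card (Ds (2*k'+1)) = 1" by simp
      moreover note \<open>card (Ds (2*k'+1)) \<le> card (Ds (2*j'+1))\<close>
      moreover have "card (Ds (2*j'+1)) \<le> 1" by (rule Dle[OF l nb])
      moreover have "D H B0 ms j = card (Ds (2*j'+1))" using DD[of j] jj by simp
      ultimately show "D H B0 ms j = 1" by linarith
    qed
  qed
qed

end
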